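(* Let $p,q,r$ be probability distributions on a finite alphabet $\mathcal{X}$ and let $\mu_q=\min_{x\in\mathcal{X}}q(x)$. Then $$\mathbb{D}(p\|q)\le\log\Big(\frac1{\mu_q}\Big)\sqrt{2\ln2}\Big[\sqrt{\min(\mathbb{D}(p\|r),\mathbb{D}(r\|p))}+\sqrt{\min(\mathbb{D}(q\|r),\mathbb{D}(r\|q))}\Big].$$
   Context: $\log$ is base 2 and $\ln$ is the natural logarithm; $\mathbb{D}(p\|q)=\sum_xp(x)\log\frac{p(x)}{q(x)}$ is the Kullback–Leibler divergence, with the convention $\mathbb{D}(p\|q)=+\infty$ if $p(x)>0=q(x)$ for some $x$ (the inequality being trivial when some quantity is infinite). *)

theory Defs
  imports "HOL-Analysis.Analysis" "HOL-Library.Extended_Real"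
begin

definition is_distr :: "('a::finite \<Rightarrow> real) \<Rightarrow> bool" where
  "is_distr p \<longleftrightarrow> (\<forall>x. p x \<ge> 0) \<and> (\<Sum>x\<in>UNIV. p x) = 1"

definition KL :: "('a::finite \<Rightarrow> real) \<Rightarrow> ('a \<Rightarrow> real) \<Rightarrow> ereal" where
  "KL p q = (if \<exists>x. p x > 0 \<and> q x = 0 then \<infinity>
             else ereal (\<Sum>x\<in>UNIV. if p x = 0 then 0 else p x * log 2 (p x / q x)))"

definition esqrt :: "ereal \<Rightarrow> ereal" where
  "esqrt t = (if t = \<infinity> then \<infinity> else ereal (sqrt (real_of_ereal t)))"

definition elog_inv :: "real \<Rightarrow> ereal" where
  "elog_inv m = (if m = 0 then \<infinity> else ereal (log 2 (1 / m)))"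

end

theory Submission
  imports Defs
begin


lemma K2aux:
  fixes u :: real assumes "0 < u" "u \<le> 1/2"
  shows "- ln (1 - u) \<le> 2 * u * (- ln u)"
proof -
  define g where "g = (\<lambda>v::real. 2 * ln v - ln (1 - v) / v)"
  define g' where "g' = (\<lambda>v::real. 2 / v - ((- 1 / (1 - v)) * v - ln (1 - v)) / v^2)"
  have d: "(g has_real_derivative g' v) (at v)" if "v \<in> {u..1/2}" for v
  proof -
    from that assms have v: "0 < v" "v < 1" by auto
    show ?thesis unfolding g_def g'_def
      by (rule derivative_eq_intros refl | use v in \<open>auto simp: power2_eq_square\<close>)+
  qed
  have nn: "g' v \<ge> 0" if "v \<in> {u..1/2}" for v
  proof -
    from that assms have v: "0 < v" "v < 1" by auto
    have "ln (1/(1-v)) \<le> 1/(1-v) - 1" using v by (intro ln_le_minus_one) auto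
    then have l: "- ln (1 - v) \<le> v / (1 - v)" using v by (simp add: ln_div field_simps)
    have "((- 1 / (1 - v)) * v - ln (1 - v)) / v^2 \<le> 2 / v"
    proof -
      have "(- 1 / (1 - v)) * v - ln (1 - v) \<le> 0" using l v by (simp add: field_simps)
      moreover have "0 \<le> 2 / v" using v by simp
      ultimately show ?thesis using v by (smt (verit) divide_nonpos_pos zero_less_power)
    qed
    then show ?thesis unfolding g'_def by simp
  qed
  have "g u \<le> g (1/2)" by (rule deriv_nonneg_imp_mono[OF d nn]) (use assms in auto)
  moreover have "g (1/2) = 0" unfolding g_def by (simp add: ln_div)
  ultimately have "2 * ln u - ln (1 - u) / u \<le> 0" unfolding g_def by simp
  then have "2 * ln u * u - ln (1 - u) \<le> 0" using assms by (simp add: field_simps)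
  then show ?thesis by (simp add: algebra_simps)
qed



lemma K1:
  fixes p q :: real assumes "0 < q" "q < p" "p \<le> 1"
  shows "p * ln (p / q) \<le> (p - q) * (ln (1 / q) / (1 - q))"
proof -
  define G where "G = (\<lambda>s::real. s * (ln s - ln q) / (s - q))"
  define G' where "G' = (\<lambda>s::real. ((s - q) - q * (ln s - ln q)) / (s - q)^2)"
  have d: "(G has_real_derivative G' s) (at s)" if "s \<in> {p..1}" for s
  proof -
    from that assms have s: "q < s" "0 < s" by auto
    have "(G has_real_derivative (((1 * (ln s - ln q) + s * (1/s)) * (s - q) - s * (ln s - ln q) * 1) / (s - q)^2)) (at s)"
      unfolding G_def
      by (rule derivative_eq_intros refl | use s in \<open>auto simp: power2_eq_square\<close>)+
    moreover have "(((1 * (ln s - ln q) + s * (1/s)) * (s - q) - s * (ln s - ln q) * 1) / (s - q)^2) = G' s"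
      unfolding G'_def using s by (simp add: field_simps)
    ultimately show ?thesis by simp
  qed
  have nn: "G' s \<ge> 0" if "s \<in> {p..1}" for s
  proof -
    from that assms have s: "q < s" "0 < s" by auto
    have "ln (s/q) \<le> s/q - 1" using s assms by (intro ln_le_minus_one) auto
    then have "q * ln (s/q) \<le> s - q" using assms by (simp add: field_simps)
    then have "0 \<le> (s - q) - q * (ln s - ln q)" using s assms by (simp add: ln_div)
    then show ?thesis unfolding G'_def by simp
  qed
  have "G p \<le> G 1" by (rule deriv_nonneg_imp_mono[OF d nn]) (use assms in auto)
  then have "p * (ln p - ln q) / (p - q) \<le> ln (1 / q) / (1 - q)"
    unfolding G_def using assms by (simp add: ln_div)
  then have "p * (ln p - ln q) \<le> (p - q) * (ln (1 / q) / (1 - q))"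
    using assms by (simp add: field_simps)
  then show ?thesis using assms by (simp add: ln_div)
qed

lemma K:
  fixes p q m :: real assumes "0 < m" "m \<le> q" "m \<le> 1 - q" "q < p" "p \<le> 1"
  shows "p * ln (p / q) \<le> 2 * ln (1 / m) * (p - q)"
proof -
  have q: "0 < q" "q < 1" using assms by auto
  have "ln (1 / q) / (1 - q) \<le> 2 * ln (1 / m)"
  proof (cases "q \<le> 1/2")
    case True
    have l0: "0 \<le> ln (1/q)" using q by simp
    have "ln (1 / q) / (1 - q) \<le> 2 * ln (1/q)"
      using l0 True q by (simp add: field_simps)
    also have "\<dots> \<le> 2 * ln (1/m)" using assms q by (simp add: ln_div)
    finally show ?thesis .
  next
    case False
    define u where "u = 1 - q"
    have u: "0 < u" "u \<le> 1/2" using False q unfolding u_def by auto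
    have "- ln (1 - u) \<le> 2 * u * (- ln u)" by (rule K2aux[OF u])
    then have "ln (1 / q) / (1 - q) \<le> 2 * (- ln u)"
      using u unfolding u_def by (simp add: ln_div field_simps)
    also have "\<dots> \<le> 2 * ln (1/m)" using assms u unfolding u_def by (simp add: ln_div)
    finally show ?thesis .
  qed
  moreover have "p * ln (p / q) \<le> (p - q) * (ln (1 / q) / (1 - q))" by (rule K1) (use assms q in auto)
  ultimately show ?thesis using assms
    by (smt (verit) mult_left_mono mult.commute)
qed



lemma T1: fixes P b :: real assumes "P = 0 \<or> 0 < b"
  shows "((\<lambda>b. P * ln (P / b)) has_real_derivative (- P / b)) (at b)"
proof (cases "P = 0")
  case True then show ?thesis by simp
next
  case False
  with assms have b: "0 < b" by auto
  have "((\<lambda>b. P * ln P - P * ln b) has_real_derivative (0 - P * inverse b)) (at b)"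
    by (intro DERIV_diff DERIV_const DERIV_cmult DERIV_ln b)
  then have "((\<lambda>b. P * ln P - P * ln b) has_real_derivative (- P / b)) (at b)" by (simp add: field_simps)
  then show ?thesis
  proof (rule has_field_derivative_transform_within_open[where S="{0<..}"])
    fix x :: real assume "x \<in> {0<..}"
    then show "P * ln P - P * ln x = P * ln (P / x)"
      using False by (simp add: ln_div algebra_simps)
  qed (use b in auto)
qed

lemma T2: fixes P b :: real assumes "P = 1 \<or> b < 1"
  shows "((\<lambda>b. (1 - P) * ln ((1 - P) / (1 - b))) has_real_derivative ((1 - P) / (1 - b))) (at b)"
proof (cases "P = 1")
  case True then show ?thesis by simp
next
  case False
  with assms have b: "b < 1" by auto
  have "((\<lambda>b. (1 - P) * ln (1 - P) - (1 - P) * ln (1 - b)) has_real_derivative (0 - (1 - P) * (inverse (1 - b) * (0 - 1)))) (at b)"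
    by (intro DERIV_diff DERIV_const DERIV_cmult DERIV_ln DERIV_chain2[where f=ln] DERIV_ident) (use b in auto)
  then have "((\<lambda>b. (1 - P) * ln (1 - P) - (1 - P) * ln (1 - b)) has_real_derivative ((1 - P) / (1 - b))) (at b)" by (simp add: field_simps)
  then show ?thesis
  proof (rule has_field_derivative_transform_within_open[where S="{..<1}"])
    fix x :: real assume "x \<in> {..<1}"
    then show "(1 - P) * ln (1 - P) - (1 - P) * ln (1 - x) = (1 - P) * ln ((1 - P) / (1 - x))"
      using False by (simp add: ln_div algebra_simps)
  qed (use b in auto)
qed


lemma BP:
  fixes P R :: real
  assumes "0 \<le> P" "P \<le> 1" "0 \<le> R" "R \<le> 1" "0 < P \<Longrightarrow> 0 < R" "P < 1 \<Longrightarrow> R < 1"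
  shows "2 * (P - R)^2 \<le> P * ln (P / R) + (1 - P) * ln ((1 - P) / (1 - R))"
proof -
  define f where "f = (\<lambda>b. P * ln (P / b) + (1 - P) * ln ((1 - P) / (1 - b)) - 2 * (P - b)^2)"
  define f' where "f' = (\<lambda>b. - P / b + (1 - P) / (1 - b) + 4 * (P - b))"
  have der: "(f has_real_derivative f' b) (at b)" if "P = 0 \<or> 0 < b" "P = 1 \<or> b < 1" for b
  proof -
    have "(f has_real_derivative (- P / b + (1 - P) / (1 - b) - 2 * (2 * (P - b) * (0 - 1)))) (at b)"
      unfolding f_def
      by (rule derivative_eq_intros T1 T2 that refl | simp)+
    then show ?thesis unfolding f'_def by (simp add: algebra_simps)
  qed
  have fe: "f' b = (b - P) * (1 - 2 * b)^2 / (b * (1 - b))" if "0 < b" "b < 1" for b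
    unfolding f'_def using that by (simp add: field_simps power2_eq_square)
  have fP: "f P = 0" unfolding f_def by (cases "P = 0"; cases "P = 1") auto
  have "f P \<le> f R"
  proof (cases "P \<le> R")
    case True
    show ?thesis
    proof (cases "P = R")
      case True then show ?thesis by simp
    next
      case False
      with \<open>P \<le> R\<close> have PR: "P < R" by simp
      with assms have R1: "R < 1" by force
      have d: "(f has_real_derivative f' b) (at b)" if "b \<in> {P..R}" for b
        using that assms R1 by (intro der) auto
      have n: "f' b \<ge> 0" if "b \<in> {P..R}" for b
      proof (cases "b = 0")
        case True then show ?thesis unfolding f'_def using that assms by auto
      next
        case False
        then have b: "0 < b" "b < 1" using that assms R1 by auto
        show ?thesis using b that by (subst fe) (auto intro!: divide_nonneg_pos mult_nonneg_nonneg)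
      qed
      show ?thesis by (rule deriv_nonneg_imp_mono[OF d n]) (use PR in auto)
    qed
  next
    case False
    then have RP: "R < P" by simp
    with assms have R0: "0 < R" by force
    have d: "((\<lambda>b. - f b) has_real_derivative - f' b) (at b)" if "b \<in> {R..P}" for b
      using that assms R0 by (intro derivative_intros der) auto
    have n: "- f' b \<ge> 0" if "b \<in> {R..P}" for b
    proof (cases "b = 1")
      case True then show ?thesis unfolding f'_def using that assms by auto
    next
      case False
      then have b: "0 < b" "b < 1" using that assms R0 by auto
      have "f' b \<le> 0" using b that
        by (subst fe) (auto intro!: divide_nonpos_pos mult_nonpos_nonneg)
      then show ?thesis by simp
    qed
    have "- f R \<le> - f P" by (rule deriv_nonneg_imp_mono[OF d n]) (use RP in auto)
    then show ?thesis by simp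
  qed
  then show ?thesis using fP unfolding f_def by simp
qed



lemma LS:
  fixes a b :: "'a \<Rightarrow> real"
  assumes fin: "finite B" and nn: "\<And>i. i \<in> B \<Longrightarrow> 0 \<le> a i" "\<And>i. i \<in> B \<Longrightarrow> 0 \<le> b i"
    and pos: "\<And>i. i \<in> B \<Longrightarrow> 0 < a i \<Longrightarrow> 0 < b i"
  shows "(\<Sum>i\<in>B. a i) * ln ((\<Sum>i\<in>B. a i) / (\<Sum>i\<in>B. b i)) \<le> (\<Sum>i\<in>B. a i * ln (a i / b i))"
proof (cases "(\<Sum>i\<in>B. a i) = 0")
  case True
  then have "\<forall>i\<in>B. a i = 0" using sum_nonneg_eq_0_iff[OF fin] nn by blast
  then show ?thesis using True by simp
next
  case False
  define A where "A = (\<Sum>i\<in>B. a i)"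
  define Bs where "Bs = (\<Sum>i\<in>B. b i)"
  have A0: "0 < A" using False nn unfolding A_def by (simp add: sum_nonneg order_less_le)
  obtain j where j: "j \<in> B" "a j \<noteq> 0" using False by (meson sum.neutral)
  then have "0 < a j" using nn by (simp add: order_less_le)
  then have "0 < b j" using pos j by simp
  have "b j \<le> Bs" unfolding Bs_def using fin j nn by (intro member_le_sum) auto
  then have B0: "0 < Bs" using \<open>0 < b j\<close> by simp
  have trm: "a i * ln (A / Bs) + a i - b i * (A / Bs) \<le> a i * ln (a i / b i)" if i: "i \<in> B" for i
  proof (cases "a i = 0")
    case True then show ?thesis using nn(2)[OF i] A0 B0 by simp
  next
    case False
    then have ai: "0 < a i" using nn i by (simp add: order_less_le)
    then have bi: "0 < b i" using pos i by simp
    define x where "x = b i * A / (a i * Bs)"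
    have x0: "0 < x" unfolding x_def using ai bi A0 B0 by simp
    have "ln x \<le> x - 1" by (rule ln_le_minus_one[OF x0])
    moreover have "ln x = ln (A / Bs) - ln (a i / b i)"
      unfolding x_def using ai bi A0 B0 by (simp add: ln_div ln_mult)
    ultimately have "ln (A / Bs) - ln (a i / b i) \<le> b i * A / (a i * Bs) - 1" unfolding x_def by simp
    then have "a i * (ln (A / Bs) - ln (a i / b i)) \<le> a i * (b i * A / (a i * Bs) - 1)"
      using ai by (intro mult_left_mono) auto
    then show ?thesis using ai by (simp add: algebra_simps)
  qed
  have "(\<Sum>i\<in>B. a i * ln (A / Bs) + a i - b i * (A / Bs)) \<le> (\<Sum>i\<in>B. a i * ln (a i / b i))"
    by (rule sum_mono[OF trm])
  moreover have "(\<Sum>i\<in>B. a i * ln (A / Bs) + a i - b i * (A / Bs)) = A * ln (A / Bs)"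
  proof -
    have "(\<Sum>i\<in>B. b i * (A / Bs)) = Bs * (A / Bs)" unfolding Bs_def by (rule sum_distrib_right[symmetric])
    also have "\<dots> = A" using B0 by simp
    finally have e: "(\<Sum>i\<in>B. b i * (A / Bs)) = A" .
    have "(\<Sum>i\<in>B. a i * ln (A / Bs) + a i - b i * (A / Bs)) = (\<Sum>i\<in>B. a i) * ln (A / Bs) + (\<Sum>i\<in>B. a i) - (\<Sum>i\<in>B. b i * (A / Bs))"
      by (simp add: sum.distrib sum_subtractf sum_distrib_right)
    then show ?thesis using e unfolding A_def by simp
  qed
  ultimately show ?thesis unfolding A_def Bs_def by simp
qed



lemma pinsker:
  fixes p r :: "'a::finite \<Rightarrow> real"
  assumes p: "is_distr p" and r: "is_distr r" and pos: "\<And>x. 0 < p x \<Longrightarrow> 0 < r x"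
  shows "(\<Sum>x\<in>UNIV. \<bar>p x - r x\<bar>)^2 \<le> 2 * (\<Sum>x\<in>UNIV. p x * ln (p x / r x))"
proof -
  have p0: "\<And>x. 0 \<le> p x" and p1: "(\<Sum>x\<in>UNIV. p x) = 1" using p unfolding is_distr_def by auto
  have r0: "\<And>x. 0 \<le> r x" and r1: "(\<Sum>x\<in>UNIV. r x) = 1" using r unfolding is_distr_def by auto
  define A where "A = {x. r x \<le> p x}"
  define C where "C = UNIV - A"
  define P where "P = (\<Sum>x\<in>A. p x)"
  define R where "R = (\<Sum>x\<in>A. r x)"
  have split: "(\<Sum>x\<in>UNIV. g x) = (\<Sum>x\<in>A. g x) + (\<Sum>x\<in>C. g x)" for g :: "'a \<Rightarrow> real"
    unfolding C_def by (metis Diff_partition add.commute finite sum.subset_diff top_greatest)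
  have pC: "(\<Sum>x\<in>C. p x) = 1 - P" using split[of p] p1 unfolding P_def by simp
  have rC: "(\<Sum>x\<in>C. r x) = 1 - R" using split[of r] r1 unfolding R_def by simp
  have P0: "0 \<le> P" unfolding P_def using p0 by (simp add: sum_nonneg)
  have R0: "0 \<le> R" unfolding R_def using r0 by (simp add: sum_nonneg)
  have P1: "P \<le> 1" using pC p0 by (metis diff_ge_0_iff_ge sum_nonneg)
  have R1: "R \<le> 1" using rC r0 by (metis diff_ge_0_iff_ge sum_nonneg)
  have l1: "(\<Sum>x\<in>UNIV. \<bar>p x - r x\<bar>) = 2 * (P - R)"
  proof -
    have "(\<Sum>x\<in>A. \<bar>p x - r x\<bar>) = (\<Sum>x\<in>A. p x - r x)" by (rule sum.cong) (auto simp: A_def)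
    also have "\<dots> = P - R" unfolding P_def R_def by (simp add: sum_subtractf)
    finally have a: "(\<Sum>x\<in>A. \<bar>p x - r x\<bar>) = P - R" .
    have "(\<Sum>x\<in>C. \<bar>p x - r x\<bar>) = (\<Sum>x\<in>C. r x - p x)" by (rule sum.cong) (auto simp: A_def C_def)
    also have "\<dots> = (1 - R) - (1 - P)" using pC rC by (simp add: sum_subtractf)
    finally have c: "(\<Sum>x\<in>C. \<bar>p x - r x\<bar>) = (1 - R) - (1 - P)" .
    show ?thesis using split[of "\<lambda>x. \<bar>p x - r x\<bar>"] a c by simp
  qed
  have lsA: "P * ln (P / R) \<le> (\<Sum>x\<in>A. p x * ln (p x / r x))"
    unfolding P_def R_def by (rule LS) (use p0 r0 pos in auto)
  have lsC: "(1 - P) * ln ((1 - P) / (1 - R)) \<le> (\<Sum>x\<in>C. p x * ln (p x / r x))"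
    unfolding pC[symmetric] rC[symmetric] by (rule LS) (use p0 r0 pos in auto)
  have PR: "0 < R" if "0 < P"
  proof (rule ccontr)
    assume "\<not> 0 < R"
    then have "R = 0" using R0 by simp
    then have "\<forall>x\<in>A. r x = 0" unfolding R_def using r0 by (simp add: sum_nonneg_eq_0_iff)
    then have "\<forall>x\<in>A. p x = 0" using pos p0 by (metis order_less_le order_less_irrefl)
    then have "P = 0" unfolding P_def by simp
    then show False using that by simp
  qed
  have PR1: "R < 1" if "P < 1"
  proof (rule ccontr)
    assume "\<not> R < 1"
    then have "1 - R = 0" using R1 by simp
    then have "\<forall>x\<in>C. r x = 0" using rC r0 by (simp add: sum_nonneg_eq_0_iff)
    then have "\<forall>x\<in>C. p x = 0" using pos p0 by (metis order_less_le order_less_irrefl)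
    then have "1 - P = 0" using pC by simp
    then show False using that by simp
  qed
  have "2 * (P - R)^2 \<le> P * ln (P / R) + (1 - P) * ln ((1 - P) / (1 - R))"
    by (rule BP) (use P0 P1 R0 R1 PR PR1 in auto)
  also have "\<dots> \<le> (\<Sum>x\<in>UNIV. p x * ln (p x / r x))"
    using split[of "\<lambda>x. p x * ln (p x / r x)"] lsA lsC by simp
  finally show ?thesis unfolding l1 by (simp add: power2_eq_square algebra_simps)
qed



lemma distr_le1: assumes "is_distr p" shows "p x \<le> 1"
proof -
  have "p x \<le> (\<Sum>y\<in>UNIV. p y)" using assms unfolding is_distr_def by (intro member_le_sum) auto
  then show ?thesis using assms unfolding is_distr_def by simp
qed

lemma KL_fin:
  fixes p q :: "'a::finite \<Rightarrow> real"
  assumes "\<And>x. 0 < p x \<Longrightarrow> 0 < q x" "is_distr p"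
  shows "KL p q = ereal ((\<Sum>x\<in>UNIV. p x * ln (p x / q x)) / ln 2)"
proof -
  have "\<not> (\<exists>x. p x > 0 \<and> q x = 0)" using assms(1) by force
  then have "KL p q = ereal (\<Sum>x\<in>UNIV. if p x = 0 then 0 else p x * log 2 (p x / q x))"
    unfolding KL_def by simp
  also have "(\<Sum>x\<in>UNIV. if p x = 0 then 0 else p x * log 2 (p x / q x)) = (\<Sum>x\<in>UNIV. p x * ln (p x / q x) / ln 2)"
    by (rule sum.cong) (auto simp: log_def)
  also have "\<dots> = (\<Sum>x\<in>UNIV. p x * ln (p x / q x)) / ln 2" by (simp add: sum_divide_distrib)
  finally show ?thesis .
qed

lemma rev_bound:
  fixes p q :: "'a::finite \<Rightarrow> real"
  assumes p: "is_distr p" and q: "is_distr q" and m: "0 < m" "\<And>x. m \<le> q x"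
  shows "(\<Sum>x\<in>UNIV. p x * ln (p x / q x)) \<le> ln (1 / m) * (\<Sum>x\<in>UNIV. \<bar>p x - q x\<bar>)"
proof -
  have p0: "\<And>x. 0 \<le> p x" and p1: "(\<Sum>x\<in>UNIV. p x) = 1" using p unfolding is_distr_def by auto
  have q0: "\<And>x. 0 \<le> q x" and q1: "(\<Sum>x\<in>UNIV. q x) = 1" using q unfolding is_distr_def by auto
  have m1: "m \<le> 1" using m(2) distr_le1[OF q] order_trans by blast
  have L0: "0 \<le> ln (1 / m)" using m m1 by simp
  have trm: "p x * ln (p x / q x) \<le> ln (1 / m) * (\<bar>p x - q x\<bar> + (p x - q x))" for x
  proof (cases "p x \<le> q x")
    case True
    then have e: "\<bar>p x - q x\<bar> + (p x - q x) = 0" by simp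
    show ?thesis
    proof (cases "p x = 0")
      case True then show ?thesis using e by simp
    next
      case False
      then have px: "0 < p x" using p0 by (simp add: order_less_le)
      have qx: "0 < q x" using m(1) m(2)[of x] by simp
      have "ln (p x / q x) \<le> 0" using px qx True by simp
      then have "p x * ln (p x / q x) \<le> 0" using px by (simp add: mult_nonneg_nonpos)
      then show ?thesis using e by simp
    qed
  next
    case False
    then have lt: "q x < p x" by simp
    have px1: "p x \<le> 1" by (rule distr_le1[OF p])
    obtain y where y: "y \<noteq> x"
    proof (cases "UNIV = {x}")
      case True
      then have "q x = 1" using q1 unfolding True by simp
      then show ?thesis using lt px1 by simp
    next
      case False
      then show ?thesis using that by blast
    qed
    have "q y + q x \<le> (\<Sum>z\<in>UNIV. q z)"
    proof -
      have "(\<Sum>z\<in>{x,y}. q z) \<le> (\<Sum>z\<in>UNIV. q z)" using q0 by (intro sum_mono2) auto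
      then show ?thesis using y by simp
    qed
    then have "m \<le> 1 - q x" using q1 m(2)[of y] by simp
    then have "p x * ln (p x / q x) \<le> 2 * ln (1 / m) * (p x - q x)"
      by (intro K) (use m lt px1 in auto)
    then show ?thesis using lt by (simp add: algebra_simps)
  qed
  have "(\<Sum>x\<in>UNIV. p x * ln (p x / q x)) \<le> (\<Sum>x\<in>UNIV. ln (1 / m) * (\<bar>p x - q x\<bar> + (p x - q x)))"
    by (rule sum_mono[OF trm])
  also have "\<dots> = ln (1 / m) * ((\<Sum>x\<in>UNIV. \<bar>p x - q x\<bar>) + ((\<Sum>x\<in>UNIV. p x) - (\<Sum>x\<in>UNIV. q x)))"
    by (simp add: sum_distrib_left[symmetric] sum.distrib sum_subtractf)
  also have "\<dots> = ln (1 / m) * (\<Sum>x\<in>UNIV. \<bar>p x - q x\<bar>)" using p1 q1 by simp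
  finally show ?thesis .
qed

lemma KL_self: "KL p p = 0"
proof -
  have "\<forall>x. (if p x = 0 then 0 else p x * log 2 (p x / p x)) = 0" by simp
  then show ?thesis unfolding KL_def by (simp add: zero_ereal_def)
qed

lemma elog_bound:
  fixes p q :: "'a::finite \<Rightarrow> real"
  assumes p: "is_distr p" and q: "is_distr q"
  shows "KL p q \<le> elog_inv (Min (range q)) * ereal (\<Sum>x\<in>UNIV. \<bar>p x - q x\<bar>)"
proof -
  define m where "m = Min (range q)"
  have mle: "m \<le> q x" for x unfolding m_def by (rule Min_le) auto
  have min: "m \<in> range q" unfolding m_def by (rule Min_in) auto
  have q0: "\<And>x. 0 \<le> q x" using q unfolding is_distr_def by auto
  have m0: "0 \<le> m" using min q0 by auto
  have m1: "m \<le> 1" using mle distr_le1[OF q] order_trans by blast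
  show ?thesis
  proof (cases "m = 0")
    case True
    show ?thesis
    proof (cases "(\<Sum>x\<in>UNIV. \<bar>p x - q x\<bar>) = 0")
      case True
      then have "\<forall>x. \<bar>p x - q x\<bar> = 0" by (subst (asm) sum_nonneg_eq_0_iff) auto
      then have "p = q" by (auto simp: fun_eq_iff)
      then show ?thesis by (simp add: KL_self zero_ereal_def[symmetric])
    next
      case False
      then have "0 < (\<Sum>x\<in>UNIV. \<bar>p x - q x\<bar>)" by (simp add: order_less_le sum_nonneg)
      then show ?thesis using \<open>m = 0\<close> unfolding m_def[symmetric] elog_inv_def by simp
    qed
  next
    case False
    then have m0': "0 < m" using m0 by simp
    have qp: "0 < q x" for x using mle[of x] m0' by simp
    have "KL p q = ereal ((\<Sum>x\<in>UNIV. p x * ln (p x / q x)) / ln 2)" by (rule KL_fin) (use qp p in auto)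
    also have "\<dots> \<le> ereal (ln (1 / m) * (\<Sum>x\<in>UNIV. \<bar>p x - q x\<bar>) / ln 2)"
      using rev_bound[OF p q m0' mle] by (simp add: divide_right_mono)
    also have "\<dots> = elog_inv m * ereal (\<Sum>x\<in>UNIV. \<bar>p x - q x\<bar>)"
      using False unfolding elog_inv_def by (simp add: log_def)
    finally show ?thesis unfolding m_def .
  qed
qed

lemma esqrt_nonneg: "0 \<le> t \<Longrightarrow> 0 \<le> esqrt t" unfolding esqrt_def by (auto simp: real_of_ereal_pos)

lemma l1_esqrt:
  fixes p r :: "'a::finite \<Rightarrow> real"
  assumes p: "is_distr p" and r: "is_distr r"
  shows "ereal (\<Sum>x\<in>UNIV. \<bar>p x - r x\<bar>) \<le> ereal (sqrt (2 * ln 2)) * esqrt (KL p r)"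
proof (cases "\<exists>x. p x > 0 \<and> r x = 0")
  case True
  then have "KL p r = \<infinity>" unfolding KL_def by simp
  then show ?thesis unfolding esqrt_def by simp
next
  case False
  have r0: "\<And>x. 0 \<le> r x" using r unfolding is_distr_def by auto
  have pos: "0 < r x" if "0 < p x" for x using False that r0[of x] by (auto simp: order_less_le)
  define S where "S = (\<Sum>x\<in>UNIV. p x * ln (p x / r x))"
  define l where "l = (\<Sum>x\<in>UNIV. \<bar>p x - r x\<bar>)"
  have pin: "l^2 \<le> 2 * S" unfolding l_def S_def by (rule pinsker[OF p r pos])
  have l0: "0 \<le> l" unfolding l_def by (simp add: sum_nonneg)
  have S0: "0 \<le> S" using pin by (smt (verit) zero_le_power2)
  have KL: "KL p r = ereal (S / ln 2)" unfolding S_def by (rule KL_fin) (use pos p in auto)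
  have "l = sqrt (l^2)" using l0 by simp
  also have "\<dots> \<le> sqrt (2 * S)" using pin by (rule real_sqrt_le_mono)
  also have "\<dots> = sqrt (2 * ln 2) * sqrt (S / ln 2)" by (simp add: real_sqrt_mult[symmetric])
  finally have "l \<le> sqrt (2 * ln 2) * sqrt (S / ln 2)" .
  then show ?thesis unfolding KL esqrt_def l_def[symmetric] by simp
qed

lemma KL_nonneg:
  fixes p r :: "'a::finite \<Rightarrow> real"
  assumes p: "is_distr p" and r: "is_distr r"
  shows "0 \<le> KL p r"
proof (cases "\<exists>x. p x > 0 \<and> r x = 0")
  case True
  then have "KL p r = \<infinity>" unfolding KL_def by simp
  then show ?thesis by simp
next
  case False
  have r0: "\<And>x. 0 \<le> r x" using r unfolding is_distr_def by auto
  have pos: "0 < r x" if "0 < p x" for x using False that r0[of x] by (auto simp: order_less_le)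
  define S where "S = (\<Sum>x\<in>UNIV. p x * ln (p x / r x))"
  have pin: "(\<Sum>x\<in>UNIV. \<bar>p x - r x\<bar>)^2 \<le> 2 * S" unfolding S_def by (rule pinsker[OF p r pos])
  have S0: "0 \<le> S" using pin by (smt (verit) zero_le_power2)
  have KL: "KL p r = ereal (S / ln 2)" unfolding S_def by (rule KL_fin) (use pos p in auto)
  show ?thesis unfolding KL using S0 by simp
qed

lemma l1_min:
  fixes p r :: "'a::finite \<Rightarrow> real"
  assumes p: "is_distr p" and r: "is_distr r"
  shows "ereal (\<Sum>x\<in>UNIV. \<bar>p x - r x\<bar>) \<le> ereal (sqrt (2 * ln 2)) * esqrt (min (KL p r) (KL r p))"
proof -
  have e: "(\<Sum>x\<in>UNIV. \<bar>r x - p x\<bar>) = (\<Sum>x\<in>UNIV. \<bar>p x - r x\<bar>)" by (simp add: abs_minus_commute)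
  show ?thesis
  proof (cases "KL p r \<le> KL r p")
    case True then show ?thesis using l1_esqrt[OF p r] by (simp add: min_def)
  next
    case False then show ?thesis using l1_esqrt[OF r p] e by (simp add: min_def)
  qed
qed

theorem lemma16:
  fixes p q r :: "'a::finite \<Rightarrow> real"
  assumes "is_distr p" and "is_distr q" and "is_distr r"
  shows "KL p q \<le> elog_inv (Min (range q)) * ereal (sqrt (2 * ln 2)) *
           (esqrt (min (KL p r) (KL r p)) + esqrt (min (KL q r) (KL r q)))"
proof -
  define E where "E = elog_inv (Min (range q))"
  define c where "c = ereal (sqrt (2 * ln 2))"
  define a where "a = esqrt (min (KL p r) (KL r p))"
  define b where "b = esqrt (min (KL q r) (KL r q))"
  have E0: "0 \<le> E"
  proof -
    have mle: "Min (range q) \<le> q x" for x by (rule Min_le) auto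
    have "Min (range q) \<in> range q" by (rule Min_in) auto
    then have a0: "0 \<le> Min (range q)" using assms(2) unfolding is_distr_def by auto
    have a1: "Min (range q) \<le> 1" using mle distr_le1[OF assms(2)] order_trans by blast
    show ?thesis
    proof (cases "Min (range q) = 0")
      case True then show ?thesis unfolding E_def elog_inv_def by simp
    next
      case False
      then have "0 < Min (range q)" using a0 by (metis order_less_le)
      moreover have "1 \<le> 1 / Min (range q)" using calculation a1 by simp
      ultimately show ?thesis unfolding E_def elog_inv_def using False by simp
    qed
  qed
  have c0: "0 \<le> c" unfolding c_def by simp
  have tri: "(\<Sum>x\<in>UNIV. \<bar>p x - q x\<bar>) \<le> (\<Sum>x\<in>UNIV. \<bar>p x - r x\<bar>) + (\<Sum>x\<in>UNIV. \<bar>q x - r x\<bar>)"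
    unfolding sum.distrib[symmetric] by (rule sum_mono) (smt (verit))
  have "KL p q \<le> E * ereal (\<Sum>x\<in>UNIV. \<bar>p x - q x\<bar>)" unfolding E_def by (rule elog_bound[OF assms(1,2)])
  also have "\<dots> \<le> E * (ereal (\<Sum>x\<in>UNIV. \<bar>p x - r x\<bar>) + ereal (\<Sum>x\<in>UNIV. \<bar>q x - r x\<bar>))"
    using tri E0 by (intro ereal_mult_left_mono) auto
  also have "\<dots> \<le> E * (c * a + c * b)"
    using l1_min[OF assms(1,3)] l1_min[OF assms(2,3)] E0 unfolding a_def b_def c_def
    by (intro ereal_mult_left_mono add_mono) auto
  also have "\<dots> = E * c * (a + b)"
  proof -
    have "0 \<le> a" unfolding a_def using KL_nonneg[OF assms(1,3)] KL_nonneg[OF assms(3,1)] by (intro esqrt_nonneg) (simp add: min_def)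
    moreover have "0 \<le> b" unfolding b_def using KL_nonneg[OF assms(2,3)] KL_nonneg[OF assms(3,2)] by (intro esqrt_nonneg) (simp add: min_def)
    ultimately have "c * (a + b) = c * a + c * b" by (rule ereal_right_distrib)
    then show ?thesis by (simp add: mult.assoc)
  qed
  finally show ?thesis unfolding E_def c_def a_def b_def .
qed


end
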